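(* Write \[ \frac{J_5^2 J_{10}^5 J_{4,10}^2}{J_{2,10}^4 J_{3,10}^3} = 1 + \sum_{n\ge 1} b(n) q^n . \] Then $b(n) \ge \lfloor n/6 \rfloor$ for all $n \ge 1$.
   Context: Notation: $(a;q)_\infty = \prod_{i\ge 0}(1-aq^i)$ and $(a_1,\dots,a_k;q)_\infty = (a_1;q)_\infty\cdots(a_k;q)_\infty$. For positive integers $a<b$: $J_b = (q^b;q^b)_\infty$ and $J_{a,b} = (q^a, q^{b-a}, q^b; q^b)_\infty$. *)

theory Defs
  imports Complex_Main "HOL-Computational_Algebra.Formal_Power_Series"
begin

definition qpoch_inf :: "nat \<Rightarrow> nat \<Rightarrow> rat fps" where
  "qpoch_inf a m = lim (\<lambda>N. \<Prod>i<N. (1 - fps_X ^ (a + i * m)))"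

definition J :: "nat \<Rightarrow> rat fps" where
  "J b = qpoch_inf b b"

definition J2 :: "nat \<Rightarrow> nat \<Rightarrow> rat fps" where
  "J2 a b = qpoch_inf a b * qpoch_inf (b - a) b * qpoch_inf b b"

definition F3 :: "rat fps" where
  "F3 = (J 5 ^ 2 * J 10 ^ 5 * J2 4 10 ^ 2) / (J2 2 10 ^ 4 * J2 3 10 ^ 3)"

end

theory Submission
  imports Defs
begin
unbundle fps_syntax



definition eqn :: "nat \<Rightarrow> rat fps \<Rightarrow> rat fps \<Rightarrow> bool" where
  "eqn n f g \<longleftrightarrow> (\<forall>j\<le>n. f $ j = g $ j)"

lemma eqn_refl[simp]: "eqn n f f" by (simp add: eqn_def)
lemma eqn_sym: "eqn n f g \<Longrightarrow> eqn n g f" by (simp add: eqn_def)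
lemma eqn_trans: "eqn n f g \<Longrightarrow> eqn n g h \<Longrightarrow> eqn n f h" by (simp add: eqn_def)

lemma eqn_zero_mult: "eqn n h 0 \<Longrightarrow> eqn n (a * h) 0"
  by (auto simp: eqn_def fps_mult_nth intro!: sum.neutral)

lemma eqn_iff_diff: "eqn n f g \<longleftrightarrow> eqn n (f - g) 0"
  by (simp add: eqn_def)

lemma eqn_mult_right: "eqn n f g \<Longrightarrow> eqn n (f * h) (g * h)"
proof -
  assume "eqn n f g"
  hence "eqn n (f - g) 0" using eqn_iff_diff by blast
  hence "eqn n (h * (f - g)) 0" by (rule eqn_zero_mult)
  hence "eqn n (f * h - g * h) 0" by (simp add: algebra_simps)
  thus ?thesis using eqn_iff_diff by blast
qed

lemma eqn_mult: "eqn n f g \<Longrightarrow> eqn n f' g' \<Longrightarrow> eqn n (f * f') (g * g')"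
  by (metis eqn_mult_right eqn_trans mult.commute)

lemma eqn_add: "eqn n f g \<Longrightarrow> eqn n f' g' \<Longrightarrow> eqn n (f + f') (g + g')"
  by (simp add: eqn_def)

lemma eqn_inverse:
  assumes "eqn n f g" "f $ 0 \<noteq> 0"
  shows "eqn n (inverse f) (inverse g)"
proof -
  have g0: "g $ 0 \<noteq> 0" using assms by (auto simp: eqn_def)
  have "inverse f - inverse g = inverse f * inverse g * (g - f)"
    using assms(2) g0 by (simp add: algebra_simps inverse_mult_eq_1 inverse_mult_eq_1'
        flip: mult.assoc)
  moreover have "eqn n (inverse f * inverse g * (g - f)) 0"
    using assms by (intro eqn_zero_mult) (simp add: eqn_def)
  ultimately show ?thesis using eqn_iff_diff by metis
qed

lemma eqn_prod_one:
  assumes "finite T" "\<And>e. e \<in> T \<Longrightarrow> eqn n (F e) 1"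
  shows "eqn n (\<Prod>e\<in>T. F e) 1"
  using assms by (induction T rule: finite_induct) (auto dest: eqn_mult[where g=1 and g'=1, simplified])

lemma eqn_prod:
  assumes "finite T" "\<And>e. e \<in> T \<Longrightarrow> eqn n (F e) (G e)"
  shows "eqn n (\<Prod>e\<in>T. F e) (\<Prod>e\<in>T. G e)"
  using assms by (induction T rule: finite_induct) (auto intro: eqn_mult)

definition fac :: "rat \<Rightarrow> nat \<Rightarrow> rat fps" where
  "fac c e = 1 + fps_const c * fps_X ^ e"

lemma fac_big: "n < e \<Longrightarrow> eqn n (fac c e) 1"
  by (auto simp: eqn_def fac_def)

lemma trunc_prod:
  assumes "finite T"
  shows "eqn n (\<Prod>e\<in>T. fac c e) (\<Prod>e\<in>T \<inter> {..n}. fac c e)"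
proof -
  have "T = (T \<inter> {..n}) \<union> (T \<inter> {n<..})" by auto
  hence "(\<Prod>e\<in>T. fac c e) = (\<Prod>e\<in>(T \<inter> {..n}) \<union> (T \<inter> {n<..}). fac c e)" by simp
  also have "\<dots> = (\<Prod>e\<in>T \<inter> {..n}. fac c e) * (\<Prod>e\<in>T \<inter> {n<..}. fac c e)"
    using assms by (intro prod.union_disjoint) auto
  finally have "(\<Prod>e\<in>T. fac c e) = (\<Prod>e\<in>T \<inter> {..n}. fac c e) * (\<Prod>e\<in>T \<inter> {n<..}. fac c e)" .
  moreover have "eqn n (\<Prod>e\<in>T \<inter> {n<..}. fac c e) 1"
    using assms by (intro eqn_prod_one) (auto intro: fac_big)
  hence "eqn n ((\<Prod>e\<in>T \<inter> {..n}. fac c e) * (\<Prod>e\<in>T \<inter> {n<..}. fac c e)) ((\<Prod>e\<in>T \<inter> {..n}. fac c e) * 1)"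
    by (rule eqn_mult[OF eqn_refl])
  ultimately show ?thesis by (simp only: mult_1_right)
qed

definition EPc :: "rat \<Rightarrow> nat set \<Rightarrow> rat fps" where
  "EPc c S = Abs_fps (\<lambda>n. (\<Prod>e\<in>S \<inter> {1..n}. fac c e) $ n)"

lemma master:
  assumes "finite T" "0 \<notin> T" "T \<inter> {..n} = S \<inter> {1..n}"
  shows "eqn n (\<Prod>e\<in>T. fac c e) (EPc c S)"
  unfolding eqn_def
proof safe
  fix j assume j: "j \<le> n"
  have "eqn j (\<Prod>e\<in>T. fac c e) (\<Prod>e\<in>T \<inter> {..j}. fac c e)" by (rule trunc_prod[OF assms(1)])
  moreover have "T \<inter> {..j} = S \<inter> {1..j}"
  proof -
    have "T \<inter> {..j} = (T \<inter> {..n}) \<inter> {..j}" using j by auto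
    also have "\<dots> = (S \<inter> {1..n}) \<inter> {..j}" using assms(3) by simp
    also have "\<dots> = S \<inter> {1..j}" using j by auto
    finally show ?thesis .
  qed
  moreover have "EPc c S $ j = (\<Prod>e\<in>S \<inter> {1..j}. fac c e) $ j" by (simp add: EPc_def)
  ultimately show "(\<Prod>e\<in>T. fac c e) $ j = EPc c S $ j"
    unfolding eqn_def by (metis order_refl)
qed

lemma EPc_eqn: "0 \<notin> S \<Longrightarrow> eqn n (EPc c S) (\<Prod>e\<in>S \<inter> {1..n}. fac c e)"
  by (rule eqn_sym, rule master) auto

lemma EPc_eqn': "eqn n (EPc c S) (\<Prod>e\<in>S \<inter> {1..n}. fac c e)"
  by (rule eqn_sym, rule master) auto

lemma eqn_all: "(\<And>n. eqn n f g) \<Longrightarrow> f = g"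
  by (auto simp: eqn_def fps_eq_iff)

lemma EPc_union:
  assumes "S \<inter> S' = {}"
  shows "EPc c (S \<union> S') = EPc c S * EPc c S'"
proof (rule eqn_all)
  fix n
  have "(\<Prod>e\<in>(S \<union> S') \<inter> {1..n}. fac c e) = (\<Prod>e\<in>S \<inter> {1..n}. fac c e) * (\<Prod>e\<in>S' \<inter> {1..n}. fac c e)"
  proof -
    have "(S \<union> S') \<inter> {1..n} = (S \<inter> {1..n}) \<union> (S' \<inter> {1..n})" by blast
    thus ?thesis using assms by (simp add: prod.union_disjoint Int_Un_distrib2 disjoint_iff)
  qed
  hence "eqn n (EPc c (S \<union> S')) ((\<Prod>e\<in>S \<inter> {1..n}. fac c e) * (\<Prod>e\<in>S' \<inter> {1..n}. fac c e))"
    using EPc_eqn'[of n c "S \<union> S'"] by simp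
  moreover have "eqn n ((\<Prod>e\<in>S \<inter> {1..n}. fac c e) * (\<Prod>e\<in>S' \<inter> {1..n}. fac c e)) (EPc c S * EPc c S')"
    by (intro eqn_mult eqn_sym[OF EPc_eqn'])
  ultimately show "eqn n (EPc c (S \<union> S')) (EPc c S * EPc c S')" by (rule eqn_trans)
qed

lemma fac_neg: "fac (-1) e = 1 - fps_X ^ e"
  by (simp add: fac_def fps_eq_iff)

lemma fac_pos: "fac 1 e = 1 + fps_X ^ e"
  by (simp add: fac_def)

lemma fac_double: "fac (-1) e * fac 1 e = fac (-1) (2*e)"
proof -
  have "fac (-1) e * fac 1 e = 1 - fps_X^e * fps_X^e" by (simp add: fac_neg fac_pos algebra_simps)
  also have "fps_X^e * fps_X^e = (fps_X ^ (2*e) :: rat fps)" by (simp add: mult_2 power_add)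
  finally show ?thesis by (simp add: fac_neg)
qed

lemma EPc_double:
  "EPc (-1) ((\<lambda>e. 2*e) ` S) = EPc (-1) S * EPc 1 S"
proof (rule eqn_all)
  fix n
  let ?S = "S \<inter> {1..n}"
  have "(\<Prod>e\<in>?S. fac (-1) e) * (\<Prod>e\<in>?S. fac 1 e) = (\<Prod>e\<in>?S. fac (-1) (2*e))"
    by (simp add: prod.distrib[symmetric] fac_double)
  also have "\<dots> = (\<Prod>e\<in>(\<lambda>e. 2*e) ` ?S. fac (-1) e)"
    by (subst prod.reindex) (auto simp: inj_on_def)
  finally have 1: "(\<Prod>e\<in>?S. fac (-1) e) * (\<Prod>e\<in>?S. fac 1 e) = (\<Prod>e\<in>(\<lambda>e. 2*e) ` ?S. fac (-1) e)" .
  have 2: "eqn n (\<Prod>e\<in>(\<lambda>e. 2*e) ` ?S. fac (-1) e) (EPc (-1) ((\<lambda>e. 2*e) ` S))"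
    by (rule master) auto
  have 3: "eqn n (EPc (-1) S * EPc 1 S) ((\<Prod>e\<in>?S. fac (-1) e) * (\<Prod>e\<in>?S. fac 1 e))"
    by (intro eqn_mult EPc_eqn')
  show "eqn n (EPc (-1) ((\<lambda>e. 2*e) ` S)) (EPc (-1) S * EPc 1 S)"
    using 1 2 3 by (metis eqn_sym eqn_trans)
qed




definition R :: "nat \<Rightarrow> nat \<Rightarrow> nat set" where
  "R a m = range (\<lambda>i. a + i * m)"


lemma part_set:
  assumes "0 < m" "n < N"
  shows "(\<lambda>i. a + i * m) ` {..<N} \<inter> {..n} = R a m \<inter> {..n}"
proof (intro equalityI subsetI)
  fix x assume "x \<in> R a m \<inter> {..n}"
  then obtain i where x: "x = a + i * m" "a + i * m \<le> n" by (auto simp: R_def)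
  have "i \<le> i * m" using assms by simp
  hence "i < N" using x assms by linarith
  thus "x \<in> (\<lambda>i. a + i * m) ` {..<N} \<inter> {..n}" using x by auto
qed (auto simp: R_def)

lemma part_eqn:
  assumes "0 < a" "0 < m" "n < N"
  shows "eqn n (\<Prod>i<N. fac c (a + i * m)) (EPc c (R a m))"
proof -
  have "(\<Prod>i<N. fac c (a + i * m)) = (\<Prod>e\<in>(\<lambda>i. a + i * m) ` {..<N}. fac c e)"
    using assms by (subst prod.reindex) (auto simp: inj_on_def)
  also have "eqn n \<dots> (EPc c (R a m))"
  proof (rule master)
    have "0 \<notin> R a m" using assms(1) by (auto simp: R_def)
    thus "(\<lambda>i. a + i * m) ` {..<N} \<inter> {..n} = R a m \<inter> {1..n}"
    proof -
      have "R a m \<inter> {1..n} = R a m \<inter> {..n}" using \<open>0 \<notin> R a m\<close>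
        by (auto simp: atLeastAtMost_iff atMost_iff) (metis Suc_leI gr0I)
      thus ?thesis using part_set[OF assms(2,3), of a] by simp
    qed
  qed (use assms(1) in auto)
  finally show ?thesis .
qed

lemma qpoch_EP:
  assumes "0 < a" "0 < m"
  shows "qpoch_inf a m = EPc (-1) (R a m)"
proof -
  let ?s = "\<lambda>N. \<Prod>i<N. (1 - fps_X ^ (a + i * m) :: rat fps)"
  have ev: "eqn n (?s N) (EPc (-1) (R a m))" if "n < N" for n N
    using part_eqn[OF assms that, of "-1"] by (simp add: fac_neg)
  have "?s \<longlonglongrightarrow> EPc (-1) (R a m)"
  proof (rule metric_LIMSEQ_I)
    fix r :: real assume r: "0 < r"
    obtain n where n: "(1/2::real) ^ n < r" using real_arch_pow_inv[OF r, of "1/2"] by auto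
    hence n': "inverse (2 ^ n) < r" by (simp add: power_one_over inverse_eq_divide)
    show "\<exists>no. \<forall>N\<ge>no. dist (?s N) (EPc (-1) (R a m)) < r"
    proof (intro exI allI impI)
      fix N assume "Suc n \<le> N"
      hence "eqn n (?s N) (EPc (-1) (R a m))" by (intro ev) simp
      hence "dist (?s N) (EPc (-1) (R a m)) < inverse (2 ^ n)"
        by (simp add: dist_less_eq_nth_equal eqn_def)
      thus "dist (?s N) (EPc (-1) (R a m)) < r" using n' by linarith
    qed
  qed
  thus ?thesis unfolding qpoch_inf_def by (rule limI)
qed

definition nonneg :: "rat fps \<Rightarrow> bool" where
  "nonneg f \<longleftrightarrow> (\<forall>n. f $ n \<ge> 0)"

lemma nonneg_mult: "nonneg f \<Longrightarrow> nonneg g \<Longrightarrow> nonneg (f * g)"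
  by (auto simp: nonneg_def fps_mult_nth intro!: sum_nonneg)

lemma nonneg_prod: "(\<And>x. x \<in> A \<Longrightarrow> nonneg (f x)) \<Longrightarrow> nonneg (\<Prod>x\<in>A. f x)"
proof (induction A rule: infinite_finite_induct)
  case (insert x F)
  thus ?case by (simp add: nonneg_mult)
qed (auto simp: nonneg_def)

lemma nonneg_fac_pos: "nonneg (fac 1 e)"
  by (auto simp: nonneg_def fac_pos)

lemma EPc_0: "EPc c S $ 0 = 1"
  by (simp add: EPc_def)

lemma nonneg_PP: "nonneg (EPc 1 S)"
proof -
  have "nonneg (\<Prod>e\<in>S \<inter> {1..n}. fac 1 e)" for n by (intro nonneg_prod nonneg_fac_pos)
  thus ?thesis by (auto simp: nonneg_def EPc_def)
qed

lemma inverse_fac_neg: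
  assumes "0 < e"
  shows "inverse (fac (-1) e) = Abs_fps (\<lambda>n. if e dvd n then 1 else 0)"
proof (rule fps_inverse_unique)
  show "fac (-1) e * Abs_fps (\<lambda>n. if e dvd n then 1 else 0) = 1"
  proof (rule fps_ext)
    fix n
    show "(fac (-1) e * Abs_fps (\<lambda>n. if e dvd n then 1 else 0)) $ n = (1::rat fps) $ n"
    proof -
      have "(fac (-1) e * Abs_fps (\<lambda>n. if e dvd n then 1 else 0)) $ n =
            (if e dvd n then 1 else 0) - (if n < e then 0 else (if e dvd (n - e) then 1 else 0))"
        by (simp add: fac_neg algebra_simps fps_X_power_mult_nth)
      also have "\<dots> = (1::rat fps) $ n"
      proof (cases "n < e")
        case True
        thus ?thesis using assms by (auto dest: dvd_imp_le)
      next
        case False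
        thus ?thesis using assms by (auto simp: dvd_minus_self)
      qed
      finally show ?thesis .
    qed
  qed
qed

lemma nonneg_inv_fac: "0 < e \<Longrightarrow> nonneg (inverse (fac (-1) e))"
  by (simp add: inverse_fac_neg nonneg_def)

lemma nonneg_inv_EP:
  assumes "0 \<notin> S"
  shows "nonneg (inverse (EPc (-1) S))"
  unfolding nonneg_def
proof
  fix n
  have "eqn n (inverse (EPc (-1) S)) (inverse (\<Prod>e\<in>S \<inter> {1..n}. fac (-1) e))"
    by (intro eqn_inverse EPc_eqn') (simp add: EPc_0)
  moreover have "nonneg (inverse (\<Prod>e\<in>S \<inter> {1..n}. fac (-1) e))"
    unfolding inverse_prod_fps by (intro nonneg_prod nonneg_inv_fac) auto
  ultimately show "inverse (EPc (-1) S) $ n \<ge> 0" by (auto simp: eqn_def nonneg_def)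
qed

lemma mult_ge: "nonneg f \<Longrightarrow> nonneg g \<Longrightarrow> (f * g) $ n \<ge> f $ n * g $ 0"
proof -
  assume f: "nonneg f" and g: "nonneg g"
  have "(f * g) $ n = (\<Sum>i=0..n. f$i * g$(n - i))" by (rule fps_mult_nth)
  also have "\<dots> \<ge> f $ n * g $ (n - n)"
    by (rule member_le_sum) (use f g in \<open>auto simp: nonneg_def\<close>)
  finally show ?thesis by simp
qed

lemma R_double: "R (2*a) (2*m) = (\<lambda>e. 2*e) ` R a m"
proof -
  have "(\<lambda>i. 2 * (a + i * m)) = (\<lambda>i. 2*a + i * (2*m))" by (rule ext) (simp add: algebra_simps)
  thus ?thesis by (simp only: R_def image_image)
qed

lemma R_split:
  assumes "0 < m"
  shows "R a m = R a (2*m) \<union> R (a+m) (2*m)" "R a (2*m) \<inter> R (a+m) (2*m) = {}"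
proof -
  show "R a m = R a (2*m) \<union> R (a+m) (2*m)"
  proof (intro equalityI subsetI)
    fix x assume "x \<in> R a m"
    then obtain i where x: "x = a + i * m" by (auto simp: R_def)
    show "x \<in> R a (2*m) \<union> R (a+m) (2*m)"
    proof (cases "even i")
      case True
      then obtain k where "i = 2*k" by auto
      hence "x = a + k * (2*m)" using x by simp
      thus ?thesis by (auto simp: R_def)
    next
      case False
      then obtain k where "i = 2*k+1" using oddE by blast
      hence "x = (a+m) + k * (2*m)" using x by (simp add: algebra_simps)
      thus ?thesis by (auto simp: R_def)
    qed
  next
    fix x assume "x \<in> R a (2*m) \<union> R (a+m) (2*m)"
    then obtain k where "x = a + k * (2*m) \<or> x = (a+m) + k*(2*m)" by (auto simp: R_def)
    hence "x = a + (2*k) * m \<or> x = a + (2*k+1) * m" by (auto simp: algebra_simps)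
    thus "x \<in> R a m" unfolding R_def by blast
  qed
  show "R a (2*m) \<inter> R (a+m) (2*m) = {}"
  proof (rule ccontr)
    assume "R a (2*m) \<inter> R (a+m) (2*m) \<noteq> {}"
    then obtain i j where "a + i * (2*m) = (a+m) + j * (2*m)" by (auto simp: R_def)
    hence "m * (2*i) = m * (2*j+1)" by (simp add: algebra_simps)
    hence "2*i = 2*j+1" using assms by (metis mult_left_cancel not_gr0)
    thus False by presburger
  qed
qed

lemma R_first:
  assumes "0 < m"
  shows "R a m = {a} \<union> R (a+m) m" "{a} \<inter> R (a+m) m = {}"
proof -
  show "R a m = {a} \<union> R (a+m) m"
  proof (intro equalityI subsetI)
    fix x assume "x \<in> R a m"
    then obtain i where x: "x = a + i * m" by (auto simp: R_def)
    show "x \<in> {a} \<union> R (a+m) m"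
    proof (cases i)
      case 0 thus ?thesis using x by simp
    next
      case (Suc k)
      hence "x = (a + m) + k * m" using x by simp
      thus ?thesis by (auto simp: R_def)
    qed
  next
    fix x assume "x \<in> {a} \<union> R (a+m) m"
    thus "x \<in> R a m"
    proof
      assume "x \<in> {a}"
      hence "x = a + 0 * m" by simp
      thus ?thesis unfolding R_def by blast
    next
      assume "x \<in> R (a+m) m"
      then obtain k where "x = a + m + k * m" by (auto simp: R_def)
      hence "x = a + (Suc k) * m" by simp
      thus ?thesis unfolding R_def by blast
    qed
  qed
  show "{a} \<inter> R (a+m) m = {}" using assms by (auto simp: R_def)
qed

lemma EPc_single: "0 < k \<Longrightarrow> EPc c {k} = fac c k"
proof (rule eqn_all)
  fix n assume "0 < k"
  have "eqn n (\<Prod>e\<in>{k}. fac c e) (EPc c {k})" by (rule master) (use \<open>0 < k\<close> in auto)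
  thus "eqn n (EPc c {k}) (fac c k)" by (simp add: eqn_sym)
qed




definition P :: "nat \<Rightarrow> rat fps" where
  "P m = (\<Prod>i<m. (1 - fps_X ^ (5 * (i + 1))))"

definition Gn :: "nat \<Rightarrow> nat \<Rightarrow> rat fps" where
  "Gn m k = (if k \<le> m then P m * inverse (P k * P (m - k)) else 0)"

lemma P_Suc: "P (Suc m) = P m * (1 - fps_X ^ (5 * (m + 1)))"
  by (simp add: P_def)

lemma P_0[simp]: "P 0 = 1" by (simp add: P_def)

lemma P0n: "P m $ 0 = 1"
  by (induction m) (simp_all add: P_Suc)

lemma GP: "k \<le> m \<Longrightarrow> Gn m k * (P k * P (m - k)) = P m"
proof -
  assume "k \<le> m"
  have "(P k * P (m - k)) $ 0 \<noteq> 0" by (simp add: P0n)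
  hence "inverse (P k * P (m - k)) * (P k * P (m - k)) = 1" by (rule inverse_mult_eq_1)
  thus ?thesis using \<open>k \<le> m\<close> by (simp add: Gn_def mult.assoc)
qed

lemma Gn_0: "Gn m 0 = 1"
  by (simp add: Gn_def inverse_mult_eq_1' P0n)

lemma Gn_diag: "Gn m m = 1"
  by (simp add: Gn_def inverse_mult_eq_1' P0n)

lemma Gn_big: "m < k \<Longrightarrow> Gn m k = 0"
  by (simp add: Gn_def)

lemma cancel_fps:
  fixes a b D :: "rat fps"
  assumes "a * D = b * D" "D $ 0 \<noteq> 0"
  shows "a = b"
proof -
  have "D \<noteq> 0" using assms(2) by auto
  thus ?thesis using assms(1) by simp
qed

lemma ABC:
  assumes "k < m"
  defines "u \<equiv> fps_X ^ (5 * (k + 1)) :: rat fps"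
  defines "v \<equiv> fps_X ^ (5 * (m - k)) :: rat fps"
  defines "D \<equiv> P (Suc k) * P (m - k)"
  shows "Gn m k * D = P m * (1 - u)"
    and "Gn m (Suc k) * D = P m * (1 - v)"
    and "Gn (Suc m) (Suc k) * D = P m * (1 - u * v)"
proof -
  show "Gn m k * D = P m * (1 - u)"
    using GP[of k m] assms(1) by (simp add: D_def P_Suc u_def algebra_simps)
  have mk: "m - k = Suc (m - Suc k)" using assms(1) by simp
  have pm: "P (m - k) = P (m - Suc k) * (1 - v)"
    unfolding mk P_Suc v_def using assms(1) by (simp add: Suc_diff_Suc)
  have "Gn m (Suc k) * D = (Gn m (Suc k) * (P (Suc k) * P (m - Suc k))) * (1 - v)"
    unfolding D_def pm by (simp only: mult.assoc)
  also have "\<dots> = P m * (1 - v)" using GP[of "Suc k" m] assms(1) by simp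
  finally show "Gn m (Suc k) * D = P m * (1 - v)" .
  have uv: "u * v = fps_X ^ (5 * (m + 1))"
    using assms(1) by (simp add: u_def v_def flip: power_add)
  show "Gn (Suc m) (Suc k) * D = P m * (1 - u * v)"
    using GP[of "Suc k" "Suc m"] assms(1) by (simp add: D_def uv P_Suc)
qed

lemma D_0: "(P (Suc k) * P (m - k)) $ 0 \<noteq> 0" by (simp add: P0n)

lemma R1: "Gn (Suc m) (Suc k) = Gn m k + fps_X ^ (5 * (k + 1)) * Gn m (Suc k)"
proof (cases "k < m")
  case True
  note abc = ABC[OF True]
  show ?thesis
  proof (rule cancel_fps[OF _ D_0])
    show "Gn (Suc m) (Suc k) * (P (Suc k) * P (m - k)) =
      (Gn m k + fps_X ^ (5 * (k + 1)) * Gn m (Suc k)) * (P (Suc k) * P (m - k))"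
      by (simp only: distrib_right abc(3) mult.assoc abc(1) abc(2)) (simp add: algebra_simps)
  qed
next
  case False
  thus ?thesis
    by (cases "k = m") (simp_all add: Gn_diag Gn_big)
qed

lemma R2: "Gn (Suc m) (Suc k) = fps_X ^ (5 * (m - k)) * Gn m k + Gn m (Suc k)"
proof (cases "k < m")
  case True
  note abc = ABC[OF True]
  show ?thesis
  proof (rule cancel_fps[OF _ D_0])
    show "Gn (Suc m) (Suc k) * (P (Suc k) * P (m - k)) =
      (fps_X ^ (5 * (m - k)) * Gn m k + Gn m (Suc k)) * (P (Suc k) * P (m - k))"
      by (simp only: distrib_right abc(3) mult.assoc abc(1) abc(2)) (simp add: algebra_simps)
  qed
next
  case False
  thus ?thesis
    by (cases "k = m") (simp_all add: Gn_diag Gn_big)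
qed

lemma Xk: "fps_X ^ (5 * (k + 1)) * (fps_X ^ (5 * (m - k)) * Gn m k) = fps_X ^ (5 * (m + 1)) * Gn m k"
proof (cases "k \<le> m")
  case True
  hence "5 * (k + 1) + 5 * (m - k) = 5 * (m + 1)" by simp
  hence "fps_X ^ (5 * (k + 1)) * fps_X ^ (5 * (m - k)) = (fps_X ^ (5 * (m + 1)) :: rat fps)"
    by (metis power_add)
  thus ?thesis by (metis mult.assoc)
qed (simp add: Gn_big)

definition Gi :: "nat \<Rightarrow> int \<Rightarrow> rat fps" where
  "Gi m k = (if k < 0 then 0 else Gn m (nat k))"

lemma Gi_nz: "Gi m k \<noteq> 0 \<Longrightarrow> 0 \<le> k \<and> k \<le> int m"
  by (auto simp: Gi_def Gn_def split: if_splits)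

lemma Gi2:
  "Gi (m+2) (k+1) = (1 + fps_X ^ (5 * (m + 1))) * Gi m k
     + fps_X ^ (5 * nat (int m - k + 1)) * Gi m (k - 1) + fps_X ^ (5 * nat (k + 1)) * Gi m (k + 1)"
proof (cases "k < -1")
  case True thus ?thesis by (simp add: Gi_def)
next
  case False
  show ?thesis
  proof (cases "k = -1")
    case True thus ?thesis by (simp add: Gi_def Gn_0)
  next
    case False
    with \<open>\<not> k < -1\<close> obtain k' where k: "k = int k'" by (metis nonneg_int_cases not_less zle_add1_eq_le zless_imp_add1_zle add.commute uminus_add_conv_diff diff_self int_one_le_iff_zero_less le_less one_add_one)
    have L: "Gi (m+2) (k+1) = Gn (Suc m) k' + fps_X ^ (5 * (k' + 1)) * (fps_X ^ (5 * (m - k')) * Gn m k' + Gn m (Suc k'))"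
    proof -
      have "Gi (m+2) (k+1) = Gn (Suc (Suc m)) (Suc k')" using k by (simp add: Gi_def nat_add_distrib)
      also have "\<dots> = Gn (Suc m) k' + fps_X ^ (5 * (k' + 1)) * Gn (Suc m) (Suc k')" by (rule R1)
      also have "Gn (Suc m) (Suc k') = fps_X ^ (5 * (m - k')) * Gn m k' + Gn m (Suc k')" by (rule R2)
      finally show ?thesis .
    qed
    show ?thesis
    proof (cases k')
      case 0
      have "fps_X ^ 5 * fps_X ^ (5 * m) = (fps_X ^ (5 * (m + 1)) :: rat fps)" by (simp add: power_add flip: power_add)
      thus ?thesis unfolding L using k 0
        by (simp add: Gi_def Gn_0 algebra_simps)
    next
      case (Suc j)
      have G1: "Gn (Suc m) k' = fps_X ^ (5 * (m - j)) * Gn m j + Gn m k'" using Suc R2[of m j] by simp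
      have e1: "nat (int m - k + 1) = m - j" using k Suc by simp
      have e2: "Gi m (k - 1) = Gn m j" using k Suc by (simp add: Gi_def)
      have e3: "Gi m k = Gn m k'" "Gi m (k + 1) = Gn m (Suc k')" "nat (k + 1) = k' + 1"
        using k by (simp_all add: Gi_def nat_add_distrib)
      show ?thesis unfolding L G1 e1 e2 e3 using Xk[of k' m] by (simp add: algebra_simps)
    qed
  qed
qed

definition ex :: "int \<Rightarrow> nat" where
  "ex j = nat ((5 * (j * j) - j) div 2)"

lemma ex2: "2 * int (ex j) = 5 * (j * j) - j"
proof -
  have ev: "even (j * (j - 1))" by simp
  have "5 * (j * j) - j = 2 * (2 * (j * j)) + j * (j - 1)" by (simp add: algebra_simps)
  hence even: "even (5 * (j * j) - j)" using ev by (metis dvd_add dvd_triv_left)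
  have "j \<le> j * j"
  proof (cases "j \<le> 0")
    case True thus ?thesis using zero_le_square[of j] by linarith
  next
    case False
    hence "j * 1 \<le> j * j" by (intro mult_left_mono) auto
    thus ?thesis by simp
  qed
  hence nn: "0 \<le> 5 * (j * j) - j" using zero_le_square[of j] by linarith
  show ?thesis using even nn unfolding ex_def by simp
qed

lemma ex_succ: "int (ex (j + 1)) = int (ex j) + 5 * j + 2"
proof -
  have "2 * int (ex (j + 1)) = 2 * int (ex j) + 10 * j + 4"
    unfolding ex2 by (simp add: algebra_simps)
  thus ?thesis by linarith
qed

lemma ex_abs: "\<bar>j\<bar> \<le> int (ex j)"
proof -
  have "\<bar>j\<bar> \<le> j * j"
  proof (cases "j = 0")
    case False
    hence "1 \<le> \<bar>j\<bar>" by simp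
    hence "\<bar>j\<bar> * 1 \<le> \<bar>j\<bar> * \<bar>j\<bar>" by (intro mult_left_mono) auto
    thus ?thesis by (simp add: abs_mult_self_eq)
  qed simp
  thus ?thesis using ex2[of j] zero_le_square[of j] by linarith
qed

lemma ex_shift1:
  assumes "- int N \<le> i" "i \<le> int N"
  shows "5 * nat (int N - i) + ex (i + 1) = ex i + (5 * N + 2)"
proof -
  have "int (5 * nat (int N - i) + ex (i + 1)) = int (ex i + (5 * N + 2))"
    using assms ex_succ[of i] by simp
  thus ?thesis by (simp only: of_nat_eq_iff)
qed

lemma ex_shift2:
  assumes "- int N \<le> i" "i \<le> int N"
  shows "5 * nat (int N + i) + ex (i - 1) = ex i + (5 * N + 3)"
proof -
  have "int (ex i) = int (ex (i - 1)) + 5 * (i - 1) + 2" using ex_succ[of "i - 1"] by simp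
  hence "int (5 * nat (int N + i) + ex (i - 1)) = int (ex i + (5 * N + 3))"
    using assms by simp
  thus ?thesis by (simp only: of_nat_eq_iff)
qed

definition AN :: "nat \<Rightarrow> rat fps" where
  "AN N = (\<Prod>k<N. (1 + fps_X ^ (5 * k + 2)) * (1 + fps_X ^ (5 * k + 3)))"

lemma shift_sum: "(\<Sum>j\<in>{lo..hi}. f j) = (\<Sum>i\<in>{lo+c..hi+c}. f (i - c))" for lo hi c :: int
  by (rule sum.reindex_bij_witness[of _ "\<lambda>i. i - c" "\<lambda>j. j + c"]) auto

lemma FI: "lo \<le> - int N \<Longrightarrow> int N \<le> hi \<Longrightarrow>
  AN N = (\<Sum>j\<in>{lo..hi}. Gi (2*N) (int N + j) * fps_X ^ ex j)"
proof (induction N arbitrary: lo hi)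
  case 0
  have t: "Gi 0 j * fps_X ^ ex j = (if j = 0 then 1 else 0)" for j
  proof -
    consider "j < 0" | "j = 0" | "j > 0" by linarith
    thus ?thesis
    proof cases
      case 1 thus ?thesis by (simp add: Gi_def)
    next
      case 2 thus ?thesis by (simp add: Gi_def Gn_0 ex_def)
    next
      case 3 thus ?thesis by (simp add: Gi_def Gn_big)
    qed
  qed
  have "(\<Sum>j\<in>{lo..hi}. Gi (2*0) (int 0 + j) * fps_X ^ ex j) = (\<Sum>j\<in>{lo..hi}. if j = 0 then 1 else 0)"
    using t by simp
  also have "\<dots> = 1" using 0 by simp
  finally show ?case by (simp add: AN_def)
next
  case (Suc N)
  define g where "g j = Gi (2*N) (int N + j)" for j
  have IH: "AN N = (\<Sum>j\<in>{lo'..hi'}. g j * fps_X ^ ex j)" if "lo' \<le> - int N" "int N \<le> hi'" for lo' hi'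
    using Suc.IH[OF that] by (simp add: g_def)
  have step: "Gi (2 * Suc N) (int (Suc N) + j) = (1 + fps_X ^ (5 * (2*N + 1))) * g j
     + fps_X ^ (5 * nat (int N - j + 1)) * g (j - 1) + fps_X ^ (5 * nat (int N + j + 1)) * g (j + 1)" for j
  proof -
    have a: "2 * Suc N = 2 * N + 2" "int (Suc N) + j = (int N + j) + 1"
      "int (2 * N) - (int N + j) + 1 = int N - j + 1" "int N + j - 1 = int N + (j - 1)"
      "int N + j + 1 = int N + (j + 1)" by simp_all
    show ?thesis using Gi2[of "2 * N" "int N + j"] unfolding a g_def by simp
  qed
  have S1: "(\<Sum>j\<in>{lo..hi}. (1 + fps_X ^ (5 * (2*N + 1))) * g j * fps_X ^ ex j) = (1 + fps_X ^ (5 * (2*N + 1))) * AN N"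
    using Suc.prems by (simp add: IH[of lo hi] sum_distrib_left mult.assoc)
  have S2: "(\<Sum>j\<in>{lo..hi}. fps_X ^ (5 * nat (int N - j + 1)) * g (j - 1) * fps_X ^ ex j) = AN N * fps_X ^ (5 * N + 2)"
  proof -
    have "(\<Sum>j\<in>{lo..hi}. fps_X ^ (5 * nat (int N - j + 1)) * g (j - 1) * fps_X ^ ex j) =
      (\<Sum>i\<in>{lo + -1..hi + -1}. fps_X ^ (5 * nat (int N - (i - -1) + 1)) * g (i - -1 - 1) * fps_X ^ ex (i - -1))"
      by (rule shift_sum)
    also have "\<dots> = (\<Sum>i\<in>{lo + -1..hi + -1}. g i * fps_X ^ ex i * fps_X ^ (5 * N + 2))"
    proof (rule sum.cong[OF refl])
      fix i assume "i \<in> {lo + -1..hi + -1}"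
      show "fps_X ^ (5 * nat (int N - (i - -1) + 1)) * g (i - -1 - 1) * fps_X ^ ex (i - -1) =
            g i * fps_X ^ ex i * fps_X ^ (5 * N + 2)"
      proof (cases "g i = 0")
        case False
        hence "- int N \<le> i" "i \<le> int N" using Gi_nz[of "2*N" "int N + i"] by (auto simp: g_def)
        hence "5 * nat (int N - i) + ex (i + 1) = ex i + (5 * N + 2)" by (rule ex_shift1)
        hence "fps_X ^ (5 * nat (int N - i)) * fps_X ^ ex (i + 1) = (fps_X ^ ex i * fps_X ^ (5 * N + 2) :: rat fps)"
          by (simp flip: power_add)
        thus ?thesis by (simp add: algebra_simps)
      qed simp
    qed
    also have "\<dots> = AN N * fps_X ^ (5 * N + 2)"
      using Suc.prems by (simp add: IH[of "lo + -1" "hi + -1"] sum_distrib_right)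
    finally show ?thesis .
  qed
  have S3: "(\<Sum>j\<in>{lo..hi}. fps_X ^ (5 * nat (int N + j + 1)) * g (j + 1) * fps_X ^ ex j) = AN N * fps_X ^ (5 * N + 3)"
  proof -
    have "(\<Sum>j\<in>{lo..hi}. fps_X ^ (5 * nat (int N + j + 1)) * g (j + 1) * fps_X ^ ex j) =
      (\<Sum>i\<in>{lo + 1..hi + 1}. fps_X ^ (5 * nat (int N + (i - 1) + 1)) * g (i - 1 + 1) * fps_X ^ ex (i - 1))"
      by (rule shift_sum)
    also have "\<dots> = (\<Sum>i\<in>{lo + 1..hi + 1}. g i * fps_X ^ ex i * fps_X ^ (5 * N + 3))"
    proof (rule sum.cong[OF refl])
      fix i assume "i \<in> {lo + 1..hi + 1}"
      show "fps_X ^ (5 * nat (int N + (i - 1) + 1)) * g (i - 1 + 1) * fps_X ^ ex (i - 1) =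
            g i * fps_X ^ ex i * fps_X ^ (5 * N + 3)"
      proof (cases "g i = 0")
        case False
        hence "- int N \<le> i" "i \<le> int N" using Gi_nz[of "2*N" "int N + i"] by (auto simp: g_def)
        hence "5 * nat (int N + i) + ex (i - 1) = ex i + (5 * N + 3)" by (rule ex_shift2)
        hence "fps_X ^ (5 * nat (int N + i)) * fps_X ^ ex (i - 1) = (fps_X ^ ex i * fps_X ^ (5 * N + 3) :: rat fps)"
          by (simp flip: power_add)
        thus ?thesis by (simp add: algebra_simps)
      qed simp
    qed
    also have "\<dots> = AN N * fps_X ^ (5 * N + 3)"
      using Suc.prems by (simp add: IH[of "lo + 1" "hi + 1"] sum_distrib_right)
    finally show ?thesis .
  qed
  have "(\<Sum>j\<in>{lo..hi}. Gi (2 * Suc N) (int (Suc N) + j) * fps_X ^ ex j) =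
     (\<Sum>j\<in>{lo..hi}. (1 + fps_X ^ (5 * (2*N + 1))) * g j * fps_X ^ ex j) +
     (\<Sum>j\<in>{lo..hi}. fps_X ^ (5 * nat (int N - j + 1)) * g (j - 1) * fps_X ^ ex j) +
     (\<Sum>j\<in>{lo..hi}. fps_X ^ (5 * nat (int N + j + 1)) * g (j + 1) * fps_X ^ ex j)"
    by (simp only: step distrib_right sum.distrib)
  also have "\<dots> = (1 + fps_X ^ (5 * (2*N + 1))) * AN N + AN N * fps_X ^ (5 * N + 2) + AN N * fps_X ^ (5 * N + 3)"
    by (simp only: S1 S2 S3)
  also have "\<dots> = AN (Suc N)"
  proof -
    have "fps_X ^ (5 * N + 2) * fps_X ^ (5 * N + 3) = (fps_X ^ (5 * (2*N + 1)) :: rat fps)"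
      by (simp only: power_add[symmetric]) (simp add: algebra_simps)
    thus ?thesis by (simp add: AN_def algebra_simps)
  qed
  finally show ?case by simp
qed

lemma P_eqn: "n < m \<Longrightarrow> eqn n (P m) (EPc (-1) (R 5 5))"
proof -
  assume "n < m"
  have "P m = (\<Prod>i<m. fac (-1) (5 + i * 5))"
    unfolding P_def by (rule prod.cong) (simp_all add: fac_neg)
  thus ?thesis using part_eqn[of 5 5 n m "-1"] \<open>n < m\<close> by simp
qed

lemma AN_eqn: "n < N \<Longrightarrow> eqn n (AN N) (EPc 1 (R 2 5) * EPc 1 (R 3 5))"
proof -
  assume "n < N"
  have "AN N = (\<Prod>k<N. fac 1 (2 + k * 5)) * (\<Prod>k<N. fac 1 (3 + k * 5))"
    unfolding AN_def prod.distrib[symmetric] by (rule prod.cong) (simp_all add: fac_pos add.commute mult.commute)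
  thus ?thesis using part_eqn[of 2 5 n N 1] part_eqn[of 3 5 n N 1] \<open>n < N\<close> by (simp add: eqn_mult)
qed

lemma Y_one:
  assumes "n < kk" "n < m - kk" "kk \<le> m"
  shows "eqn n (P m * Gn m kk) 1"
proof -
  define Z where "Z = EPc (-1) (R 5 5)"
  define Y where "Y = P m * Gn m kk"
  have nm: "n < m" using assms by simp
  have h: "Y * (P kk * P (m - kk)) = P m * P m"
    using GP[OF assms(3)] by (simp add: Y_def mult.assoc)
  have "eqn n (Y * (P kk * P (m - kk))) (Y * (Z * Z))"
    using assms nm by (intro eqn_mult eqn_refl P_eqn[unfolded Z_def[symmetric]])
  moreover have "eqn n (P m * P m) (Z * Z)"
    using nm by (intro eqn_mult P_eqn[unfolded Z_def[symmetric]])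
  ultimately have "eqn n (Y * (Z * Z)) (Z * Z)" using h by (metis eqn_sym eqn_trans)
  hence "eqn n (Y * (Z * Z) * inverse (Z * Z)) (Z * Z * inverse (Z * Z))" by (rule eqn_mult_right)
  moreover have "Z * Z * inverse (Z * Z) = 1"
    by (rule inverse_mult_eq_1') (simp add: Z_def EPc_0)
  ultimately show ?thesis by (simp add: Y_def mult.assoc)
qed

lemma term_nonneg:
  assumes "N = 2 * n + 1" "- int N \<le> j" "j \<le> int N"
  shows "(P (2 * N) * (Gi (2 * N) (int N + j) * fps_X ^ ex j)) $ n \<ge> 0"
proof (cases "Gi (2 * N) (int N + j) = 0")
  case False
  then obtain kk where kk: "int N + j = int kk" "kk \<le> 2 * N" "Gi (2 * N) (int N + j) = Gn (2 * N) kk"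
    using Gi_nz[OF False] by (metis Gi_def nat_eq_iff2 nat_int not_less of_nat_le_iff int_nat_eq)
  have eq: "(P (2 * N) * (Gi (2 * N) (int N + j) * fps_X ^ ex j)) $ n =
            (if n < ex j then 0 else (P (2 * N) * Gn (2 * N) kk) $ (n - ex j))"
    unfolding kk(3) mult.assoc[symmetric] by (rule fps_X_power_mult_right_nth)
  show ?thesis
  proof (cases "n < ex j")
    case False
    hence "\<bar>j\<bar> \<le> int n" using ex_abs[of j] by linarith
    hence "n < kk" "n < 2 * N - kk" using kk(1) assms(1) by linarith+
    hence "eqn n (P (2 * N) * Gn (2 * N) kk) 1" using kk(2) by (intro Y_one)
    hence "(P (2 * N) * Gn (2 * N) kk) $ (n - ex j) = (1 :: rat fps) $ (n - ex j)"
      by (simp add: eqn_def)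
    thus ?thesis unfolding eq by simp
  qed (simp add: eq)
qed simp

lemma Q_nonneg: "nonneg (EPc (-1) (R 5 5) * EPc 1 (R 2 5) * EPc 1 (R 3 5))"
  unfolding nonneg_def
proof
  fix n :: nat
  define N where "N = 2 * n + 1"
  have "eqn n (P (2 * N) * AN N) (EPc (-1) (R 5 5) * (EPc 1 (R 2 5) * EPc 1 (R 3 5)))"
    unfolding N_def by (intro eqn_mult P_eqn AN_eqn) simp_all
  hence "(EPc (-1) (R 5 5) * EPc 1 (R 2 5) * EPc 1 (R 3 5)) $ n = (P (2 * N) * AN N) $ n"
    by (simp add: eqn_def mult.assoc)
  also have "AN N = (\<Sum>j\<in>{- int N..int N}. Gi (2*N) (int N + j) * fps_X ^ ex j)"
    by (rule FI) simp_all
  also have "(P (2 * N) * \<dots>) $ n = (\<Sum>j\<in>{- int N..int N}. (P (2 * N) * (Gi (2*N) (int N + j) * fps_X ^ ex j)) $ n)"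
    by (simp add: sum_distrib_left fps_sum_nth)
  also have "\<dots> \<ge> 0"
    by (rule sum_nonneg) (use term_nonneg[OF N_def] in auto)
  finally show "(EPc (-1) (R 5 5) * EPc 1 (R 2 5) * EPc 1 (R 3 5)) $ n \<ge> 0" .
qed




abbreviation E :: "nat \<Rightarrow> nat \<Rightarrow> rat fps" where "E a m \<equiv> EPc (-1) (R a m)"


lemma E0: "EPc c S $ 0 = 1" by (rule EPc_0)

lemma H_bound: "(inverse (fac (-1) 2) * inverse (fac (-1) 3)) $ n \<ge> of_nat (n div 6)"
proof -
  define g where "g i = (if 2 dvd i then 1 else 0) * (if 3 dvd (n - i) then 1 else (0::rat))" for i
  have "(inverse (fac (-1) 2) * inverse (fac (-1) 3)) $ n = (\<Sum>i=0..n. g i)"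
    by (simp add: inverse_fac_neg fps_mult_nth g_def)
  define f where "f t = 2 * ((2*n) mod 3) + 6 * t" for t
  have fin: "f ` {..<n div 6} \<subseteq> {0..n}" unfolding f_def by auto
  have "(\<Sum>i\<in>f ` {..<n div 6}. g i) \<le> (\<Sum>i=0..n. g i)"
    by (rule sum_mono2) (use fin in \<open>auto simp: g_def\<close>)
  moreover have "(\<Sum>i\<in>f ` {..<n div 6}. g i) = (\<Sum>t<n div 6. g (f t))"
    by (subst sum.reindex) (auto simp: inj_on_def f_def)
  moreover have "g (f t) = 1" if "t < n div 6" for t
  proof -
    have "2 dvd f t" unfolding f_def by presburger
    moreover have "3 dvd (n - f t)" unfolding f_def using that by presburger
    ultimately show ?thesis by (simp add: g_def)
  qed
  hence "(\<Sum>t<n div 6. g (f t)) = of_nat (n div 6)" by simp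
  ultimately show ?thesis using \<open>_ = (\<Sum>i=0..n. g i)\<close> by simp
qed

lemma R0: "0 < a \<Longrightarrow> 0 \<notin> R a m" by (auto simp: R_def)

lemma J_E: "J b = E b b" if "0 < b" for b using that by (simp add: J_def qpoch_EP)

lemma J2_E: "0 < a \<Longrightarrow> a < 10 \<Longrightarrow> J2 a 10 = E a 10 * E (10 - a) 10 * E 10 10"
  by (simp add: J2_def qpoch_EP)

lemma E4: "E 4 10 = E 2 10 * E 7 10 * EPc 1 (R 2 5)"
proof -
  have "R 4 10 = (\<lambda>e. 2*e) ` R 2 5" using R_double[of 2 5] by simp
  hence "E 4 10 = E 2 5 * EPc 1 (R 2 5)" by (simp add: EPc_double)
  moreover have "E 2 5 = E 2 10 * E 7 10"
    using R_split[of 5 2] EPc_union[of "R 2 10" "R 7 10" "-1"] by simp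
  ultimately show ?thesis by simp
qed

lemma E6: "E 6 10 = E 3 10 * E 8 10 * EPc 1 (R 3 5)"
proof -
  have "R 6 10 = (\<lambda>e. 2*e) ` R 3 5" using R_double[of 3 5] by simp
  hence "E 6 10 = E 3 5 * EPc 1 (R 3 5)" by (simp add: EPc_double)
  moreover have "E 3 5 = E 3 10 * E 8 10"
    using R_split[of 5 3] EPc_union[of "R 3 10" "R 8 10" "-1"] by simp
  ultimately show ?thesis by simp
qed

lemma E2: "E 2 10 = fac (-1) 2 * E 12 10"
  using R_first[of 10 2] EPc_union[of "{2}" "R 12 10" "-1"] EPc_single[of 2 "-1"] by simp

lemma E3: "E 3 10 = fac (-1) 3 * E 13 10"
  using R_first[of 10 3] EPc_union[of "{3}" "R 13 10" "-1"] EPc_single[of 3 "-1"] by simp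

lemma F3_decomp:
  "F3 = (inverse (fac (-1) 2) * inverse (fac (-1) 3)) *
        ((E 5 5 * EPc 1 (R 2 5) * EPc 1 (R 3 5)) * (E 5 5 * EPc 1 (R 2 5) * EPc 1 (R 3 5)) *
         (inverse (E 2 10) * inverse (E 12 10) * inverse (E 8 10) * inverse (E 8 10) *
          inverse (E 13 10) * inverse (E 7 10)))"
proof -
  define t a2 a3 a7 a8 a12 a13 a5 b2 b3 f2 f3 where defs:
    "t = E 10 10" "a2 = E 2 10" "a3 = E 3 10" "a7 = E 7 10" "a8 = E 8 10"
    "a12 = E 12 10" "a13 = E 13 10" "a5 = E 5 5" "b2 = EPc 1 (R 2 5)" "b3 = EPc 1 (R 3 5)"
    "f2 = fac (-1) 2" "f3 = fac (-1) 3"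
  define Q where "Q = a5 * b2 * b3"
  define Y where "Y = t^7 * a2^2 * a7^2 * a3^2 * a8^2"
  define D where "D = a2 * a12 * a8 * a8 * a13 * a7"
  have num: "J 5^2 * J 10^5 * J2 4 10^2 = Q * Q * Y"
    by (simp add: J_E J2_E E4 E6 defs[symmetric] Q_def Y_def) algebra
  have e23: "f2 * a12 = a2" "f3 * a13 = a3" using E2 E3 by (simp_all add: defs)
  have "f2 * f3 * D * Y = (f2 * a12) * (f3 * a13) * (a2^3 * a8^4 * a7^3 * a3^2 * t^7)"
    by (simp add: D_def Y_def) algebra
  also have "\<dots> = (a2 * a8 * t)^4 * (a3 * a7 * t)^3" unfolding e23 by algebra
  finally have den: "J2 2 10^4 * J2 3 10^3 = f2 * f3 * D * Y"
    by (simp add: J_E J2_E defs[symmetric])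
  have Y0: "Y $ 0 = 1" by (simp add: Y_def defs EPc_0 fps_nth_power_0)
  have f0: "f2 $ 0 = 1" "f3 $ 0 = 1" by (simp_all add: defs fac_neg)
  have D0: "D $ 0 = 1" by (simp add: D_def defs EPc_0)
  have "F3 = Q * Q * Y * inverse (f2 * f3 * D * Y)"
    unfolding F3_def num den by (rule fps_divide_unit) (simp add: Y0 f0 D0)
  also have "\<dots> = (inverse f2 * inverse f3) * (Q * Q * inverse D) * (Y * inverse Y)"
    by (simp add: fps_inverse_mult)
  also have "Y * inverse Y = 1" using Y0 by (simp add: inverse_mult_eq_1')
  finally show ?thesis
    by (simp add: Q_def D_def defs fps_inverse_mult mult.assoc)
qed

theorem mainTheorem3:
  fixes n :: nat
  assumes "n \<ge> 1"
  shows "rat_of_int \<lfloor>real n / 6\<rfloor> \<le> fps_nth F3 n"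
proof -
  define H where "H = inverse (fac (-1) 2) * inverse (fac (-1) 3)"
  define Q where "Q = E 5 5 * EPc 1 (R 2 5) * EPc 1 (R 3 5)"
  define W where "W = inverse (E 2 10) * inverse (E 12 10) * inverse (E 8 10) * inverse (E 8 10) *
          inverse (E 13 10) * inverse (E 7 10)"
  have F: "F3 = H * (Q * Q * W)" unfolding H_def Q_def W_def by (rule F3_decomp)
  have nH: "nonneg H" unfolding H_def by (intro nonneg_mult nonneg_inv_fac) auto
  have nW: "nonneg W" unfolding W_def by (intro nonneg_mult nonneg_inv_EP R0) auto
  have nQ: "nonneg Q" unfolding Q_def by (rule Q_nonneg)
  have U0: "(Q * Q * W) $ 0 = 1" by (simp add: Q_def W_def EPc_0)
  have "F3 $ n \<ge> H $ n * (Q * Q * W) $ 0"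
    unfolding F by (intro mult_ge nH nonneg_mult nQ nW)
  hence "F3 $ n \<ge> H $ n" using U0 by simp
  moreover have "H $ n \<ge> of_nat (n div 6)" unfolding H_def by (rule H_bound)
  moreover have "\<lfloor>real n / 6\<rfloor> = int (n div 6)"
    using floor_divide_of_nat_eq[of n 6] by simp
  ultimately show ?thesis by simp
qed


end
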